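(* Let $L$ be a C-lattice domain in which every element is a join of principal elements. If $L$ is sharp, then $L$ is pseudo-Dedekind, i.e. $(x:a)$ is a principal element whenever $x,a\in L$ and $x$ is principal.
   Context: A multiplicative lattice is a complete lattice $(L,\le)$ with bottom $0$ and top $1$ which is also a commutative monoid with identity $1$ such that $a(\bigvee_\alpha b_\alpha)=\bigvee_\alpha(ab_\alpha)$ for all $a,b_\alpha\in L$. For $x,y\in L$, $(y:x)=\bigvee\{a\in L: ax\le y\}$. An element $c$ is compact if $c\le\bigvee S$ implies $c\le\bigvee T$ for some finite $T\subseteq S$. A C-lattice is a multiplicative lattice in which $1$ is compact, the product of two compact elements is compact, and every element is a join of compact elements. A proper element $p\ne1$ is prime if $xy\le p$ implies $x\le p$ or $y\le p$; $L$ is a domain if $0$ is prime. An element $x$ is principal if $y\wedge zx=((y:x)\wedge z)x$ and $y\vee(z:x)=((yx\vee z):x)$ for all $y,z\in L$. $L$ is sharp if whenever $a_1a_2\le b$ with $a_1,a_2,b\in L$, there exist $b_1,b_2\in L$ with $a_i\le b_i$ ($i=1,2$) and $b=b_1b_2$. *)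

theory Defs
  imports Main
begin

text \<open>Bottom is \<open>bot\<close> (written 0 in the paper), top is \<open>top = 1\<close>.\<close>

definition mult_lattice :: "'a::{complete_lattice,comm_monoid_mult} itself \<Rightarrow> bool" where
  "mult_lattice _ \<longleftrightarrow> (top::'a) = 1 \<and> (\<forall>(a::'a) S. a * Sup S = (SUP b\<in>S. a * b))"

definition res :: "'a::{complete_lattice,comm_monoid_mult} \<Rightarrow> 'a \<Rightarrow> 'a" where
  "res y x = Sup {a. a * x \<le> y}"

definition compact_el :: "'a::complete_lattice \<Rightarrow> bool" where
  "compact_el c \<longleftrightarrow> (\<forall>S. c \<le> Sup S \<longrightarrow> (\<exists>T\<subseteq>S. finite T \<and> c \<le> Sup T))"

definition C_lattice :: "'a::{complete_lattice,comm_monoid_mult} itself \<Rightarrow> bool" where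
  "C_lattice t \<longleftrightarrow> mult_lattice t \<and> compact_el (1::'a)
     \<and> (\<forall>a b::'a. compact_el a \<longrightarrow> compact_el b \<longrightarrow> compact_el (a * b))
     \<and> (\<forall>x::'a. \<exists>S. (\<forall>s\<in>S. compact_el s) \<and> x = Sup S)"

definition prime_el :: "'a::{complete_lattice,comm_monoid_mult} \<Rightarrow> bool" where
  "prime_el p \<longleftrightarrow> p \<noteq> 1 \<and> (\<forall>x y. x * y \<le> p \<longrightarrow> x \<le> p \<or> y \<le> p)"

definition lattice_domain :: "'a::{complete_lattice,comm_monoid_mult} itself \<Rightarrow> bool" where
  "lattice_domain _ \<longleftrightarrow> prime_el (bot::'a)"

definition principal_el :: "'a::{complete_lattice,comm_monoid_mult} \<Rightarrow> bool" where
  "principal_el x \<longleftrightarrow> (\<forall>y z. inf y (z * x) = (inf (res y x) z) * x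
                             \<and> sup y (res z x) = res (sup (y * x) z) x)"

definition sharp :: "'a::{complete_lattice,comm_monoid_mult} itself \<Rightarrow> bool" where
  "sharp _ \<longleftrightarrow> (\<forall>a1 a2 b::'a. a1 * a2 \<le> b \<longrightarrow>
       (\<exists>b1 b2. a1 \<le> b1 \<and> a2 \<le> b2 \<and> b = b1 * b2))"

definition pseudo_Dedekind :: "'a::{complete_lattice,comm_monoid_mult} itself \<Rightarrow> bool" where
  "pseudo_Dedekind _ \<longleftrightarrow> (\<forall>x a::'a. principal_el x \<longrightarrow> principal_el (res x a))"

end

theory Submission
  imports Defs
begin

lemma ml_top: "mult_lattice TYPE('a::{complete_lattice,comm_monoid_mult}) \<Longrightarrow> (top::'a) = 1"
  by (simp add: mult_lattice_def)

lemma ml_dist: "mult_lattice TYPE('a::{complete_lattice,comm_monoid_mult}) \<Longrightarrow> (c::'a) * Sup S = (SUP b\<in>S. c * b)"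
  by (simp add: mult_lattice_def)

lemma ml_sup: assumes "mult_lattice TYPE('a::{complete_lattice,comm_monoid_mult})"
  shows "(c::'a) * sup a b = sup (c*a) (c*b)"
proof -
  have "c * Sup {a,b} = (SUP x\<in>{a,b}. c * x)" using ml_dist[OF assms] by blast
  then show ?thesis by simp
qed

lemma ml_bot: assumes "mult_lattice TYPE('a::{complete_lattice,comm_monoid_mult})"
  shows "(c::'a) * bot = bot"
proof -
  have "c * Sup {} = (SUP x\<in>{}. c * x)" using ml_dist[OF assms] by blast
  then show ?thesis by simp
qed

lemma ml_mono: assumes "mult_lattice TYPE('a::{complete_lattice,comm_monoid_mult})"
  and "(a::'a) \<le> b" shows "c * a \<le> c * b"
proof -
  have "c * b = sup (c*a) (c*b)" using ml_sup[OF assms(1), of c a b] assms(2)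
    by (simp add: sup_absorb2)
  then show ?thesis by (metis sup_ge1)
qed

lemma ml_mono2: assumes "mult_lattice TYPE('a::{complete_lattice,comm_monoid_mult})"
  and "(a::'a) \<le> b" shows "a * c \<le> b * c"
  using ml_mono[OF assms, of c] by (simp add: mult.commute)

lemma res_upper: "(a::'a::{complete_lattice,comm_monoid_mult}) * x \<le> y \<Longrightarrow> a \<le> res y x"
  unfolding res_def by (rule Sup_upper) simp

lemma res_mult: assumes "mult_lattice TYPE('a::{complete_lattice,comm_monoid_mult})"
  shows "res (y::'a) x * x \<le> y"
proof -
  have "res y x * x = x * Sup {a. a * x \<le> y}" by (simp add: res_def mult.commute)
  also have "\<dots> = (SUP a\<in>{a. a * x \<le> y}. x * a)" using ml_dist[OF assms] by blast
  also have "\<dots> \<le> y" by (rule SUP_least) (simp add: mult.commute)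
  finally show ?thesis .
qed

lemma res_le_iff: assumes "mult_lattice TYPE('a::{complete_lattice,comm_monoid_mult})"
  shows "((a::'a) \<le> res y x) = (a * x \<le> y)"
proof
  assume "a \<le> res y x"
  then have "a * x \<le> res y x * x" by (rule ml_mono2[OF assms])
  then show "a * x \<le> y" using res_mult[OF assms] order_trans by blast
qed (rule res_upper)

lemma res_mono: assumes "mult_lattice TYPE('a::{complete_lattice,comm_monoid_mult})"
  and "(y::'a) \<le> y'" shows "res y x \<le> res y' x"
  using res_le_iff[OF assms(1)] res_mult[OF assms(1)] assms(2) by (meson order_trans order_refl)

lemma res_bot_top: assumes "mult_lattice TYPE('a::{complete_lattice,comm_monoid_mult})"
  shows "res (y::'a) bot = top"
  by (metis assms ml_bot mult.commute bot.extremum res_upper top.extremum_uniqueI)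

lemma res_top: assumes "mult_lattice TYPE('a::{complete_lattice,comm_monoid_mult})"
  shows "res (y::'a) top = y"
  using res_le_iff[OF assms, of _ y top] ml_top[OF assms]
  by (metis mult_1_right order_antisym order_refl)

lemma res_bot_dom: assumes "mult_lattice TYPE('a::{complete_lattice,comm_monoid_mult})"
  and "lattice_domain TYPE('a)" and "(x::'a) \<noteq> bot"
  shows "res bot x = bot"
proof -
  have "res bot x * x \<le> bot" by (rule res_mult[OF assms(1)])
  then show ?thesis using assms(2,3) unfolding lattice_domain_def prime_el_def
    by (metis bot.extremum_uniqueI)
qed

lemma princ_meet: assumes "mult_lattice TYPE('a::{complete_lattice,comm_monoid_mult})"
  and "principal_el (x::'a)" shows "inf y x = res y x * x"
  using assms(2) ml_top[OF assms(1)] unfolding principal_el_def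
  by (metis inf_top_right mult_1_left)

lemma princ_cancel_res: assumes "mult_lattice TYPE('a::{complete_lattice,comm_monoid_mult})"
  and "lattice_domain TYPE('a)" and "(x::'a) \<noteq> bot" and "principal_el x"
  shows "res (z * x) x = z"
proof -
  have "sup z (res bot x) = res (sup (z*x) bot) x" using assms(4) unfolding principal_el_def by blast
  then show ?thesis using res_bot_dom[OF assms(1-3)] by simp
qed

lemma princ_cancel: assumes "mult_lattice TYPE('a::{complete_lattice,comm_monoid_mult})"
  and "lattice_domain TYPE('a)" and "(x::'a) \<noteq> bot" and "principal_el x"
  and "y * x \<le> z * x" shows "y \<le> z"
  using res_upper[OF assms(5)] princ_cancel_res[OF assms(1-4)] by simp

lemma factor_principal:
  assumes ml: "mult_lattice TYPE('a::{complete_lattice,comm_monoid_mult})"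
  and dom: "lattice_domain TYPE('a)" and nz: "(x::'a) \<noteq> bot" and px: "principal_el x"
  and xe: "x = b * c"
  shows "principal_el c"
proof -
  have cc: "t \<le> s" if "t * c \<le> s * c" for t s
  proof -
    have "t * c * b \<le> s * c * b" using ml_mono2[OF ml that] .
    then have "t * x \<le> s * x" by (simp add: xe mult.commute mult.left_commute)
    then show ?thesis using princ_cancel[OF ml dom nz px] by blast
  qed
  have cb: "t \<le> s" if "b * t \<le> b * s" for t s
  proof -
    have "b * t * c \<le> b * s * c" using ml_mono2[OF ml that] .
    then have "t * x \<le> s * x" by (simp add: xe mult.commute mult.left_commute)
    then show ?thesis using princ_cancel[OF ml dom nz px] by blast
  qed
  have rc: "res y c = res (y * b) x" for y
  proof (rule order_antisym)
    have "res y c * x = (res y c * c) * b" by (simp add: xe mult.commute mult.left_commute)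
    also have "\<dots> \<le> y * b" by (rule ml_mono2[OF ml res_mult[OF ml]])
    finally show "res y c \<le> res (y * b) x" by (rule res_upper)
  next
    have "b * (res (y * b) x * c) = res (y * b) x * x" unfolding xe by (simp only: ac_simps)
    also have "\<dots> \<le> y * b" by (rule res_mult[OF ml])
    finally have "b * (res (y * b) x * c) \<le> b * y" by (simp add: mult.commute)
    then have "res (y * b) x * c \<le> y" by (rule cb)
    then show "res (y * b) x \<le> res y c" by (rule res_upper)
  qed
  have one_top: "(top::'a) = 1" by (rule ml_top[OF ml])
  show ?thesis unfolding principal_el_def
  proof (intro allI conjI)
    fix y z :: 'a
    show "inf y (z * c) = inf (res y c) z * c"
    proof (rule order_antisym)
      define w where "w = inf y (z * c)"
      have "z * c \<le> 1 * c" using ml_mono2[OF ml, of z 1 c] one_top by (metis top_greatest)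
      then have wc: "w \<le> c" unfolding w_def by (simp add: le_infI2)
      then have "w * b \<le> x" using ml_mono2[OF ml wc, of b] by (simp add: xe mult.commute)
      then have "w * b = res (w * b) x * x" using princ_meet[OF ml px, of "w*b"]
        by (simp add: inf_absorb1)
      then have "b * w = b * (res (w * b) x * c)" by (simp add: xe ac_simps)
      then have we: "w = res (w * b) x * c" using cb by (metis order_antisym order_refl)
      define d where "d = res (w * b) x"
      have "d * c \<le> y" using we unfolding d_def w_def by (metis inf_le1)
      then have d1: "d \<le> res y c" by (rule res_upper)
      have "d * c \<le> z * c" using we unfolding d_def w_def by (metis inf_le2)
      then have d2: "d \<le> z" by (rule cc)
      have "w \<le> inf (res y c) z * c" using we d1 d2 ml_mono2[OF ml, of d "inf (res y c) z" c]
        unfolding d_def by simp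
      then show "inf y (z * c) \<le> inf (res y c) z * c" unfolding w_def .
    next
      have "inf (res y c) z * c \<le> res y c * c" by (rule ml_mono2[OF ml]) simp
      also have "\<dots> \<le> y" by (rule res_mult[OF ml])
      finally have 1: "inf (res y c) z * c \<le> y" .
      have 2: "inf (res y c) z * c \<le> z * c" by (rule ml_mono2[OF ml]) simp
      show "inf (res y c) z * c \<le> inf y (z * c)" using 1 2 by simp
    qed
  next
    fix y z :: 'a
    have "res (sup (y * c) z) c = res (sup (y * c) z * b) x" by (rule rc)
    also have "sup (y * c) z * b = sup (y * x) (z * b)"
      using ml_sup[OF ml, of b "y*c" z] by (simp add: xe mult.commute mult.left_commute)
    also have "res (sup (y * x) (z * b)) x = sup y (res (z * b) x)"
      using px unfolding principal_el_def by metis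
    also have "res (z * b) x = res z c" by (simp add: rc)
    finally show "sup y (res z c) = res (sup (y * c) z) c" by simp
  qed
qed

lemma top_principal: assumes ml: "mult_lattice TYPE('a::{complete_lattice,comm_monoid_mult})"
  shows "principal_el (top::'a)"
  unfolding principal_el_def using res_top[OF ml] ml_top[OF ml] by simp

lemma bot_principal: assumes ml: "mult_lattice TYPE('a::{complete_lattice,comm_monoid_mult})"
  shows "principal_el (bot::'a)"
  unfolding principal_el_def using res_bot_top[OF ml] ml_bot[OF ml] by simp

theorem proposition3p2:
  assumes "C_lattice TYPE('a::{complete_lattice,comm_monoid_mult})"
    and "lattice_domain TYPE('a)"
    and "\<forall>x::'a. \<exists>S. (\<forall>s\<in>S. principal_el s) \<and> x = Sup S"
    and "sharp TYPE('a)"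
  shows "pseudo_Dedekind TYPE('a)"
  unfolding pseudo_Dedekind_def
proof (intro allI impI)
  have ml: "mult_lattice TYPE('a)" using assms(1) by (simp add: C_lattice_def)
  fix x a :: 'a
  assume px: "principal_el x"
  show "principal_el (res x a)"
  proof (cases "x = bot")
    case True
    show ?thesis
    proof (cases "a = bot")
      case True
      then show ?thesis using res_bot_top[OF ml] top_principal[OF ml] by simp
    next
      case False
      then show ?thesis using \<open>x = bot\<close> res_bot_dom[OF ml assms(2)] bot_principal[OF ml] by simp
    qed
  next
    case False
    have "a * res x a \<le> x" using res_mult[OF ml] by (simp add: mult.commute)
    then obtain b1 b2 where b: "a \<le> b1" "res x a \<le> b2" "x = b1 * b2"
      using assms(4) unfolding sharp_def by blast
    have "b2 * a \<le> b2 * b1" by (rule ml_mono[OF ml b(1)])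
    then have "b2 \<le> res x a" using b(3) by (simp add: res_upper mult.commute)
    then have "res x a = b2" using b(2) by simp
    then show ?thesis using factor_principal[OF ml assms(2) False px b(3)] by simp
  qed
qed

end
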